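(* $(U_0,\alpha_N)$ is a corecursive algebra for $N\otimes-$ on $\mathsf{SquaMS}$, and $(U_0,\alpha_N^{-1})$ is a final coalgebra for this same functor.
   Context: Let $M_0=\{(r,s)\in[0,1]^2: r\in\{0,1\}\text{ or } s\in\{0,1\}\}$. A square metric space is a pair $(X,S_X)$ with $X$ a metric space with all distances at most $2$ and $S_X\colon M_0\to X$ injective such that (sq1) for $i\in\{0,1\}$, $r,s\in[0,1]$: $d_X(S_X(i,r),S_X(i,s))=|s-r|$ and $d_X(S_X(r,i),S_X(s,i))=|s-r|$; (sq2) $d_X(S_X(r,s),S_X(t,u))\ge|r-t|+|s-u|$. $\mathsf{SquaMS}$: these objects, with short maps $f$ satisfying $f\circ S_X=S_Y$ as morphisms. Let $N=\{0,1,2\}^2$, also viewed as points of $\mathbb{R}^2$. For $X$ in $\mathsf{SquaMS}$, $N\otimes X=(N\times X)/\!\sim$, where $\sim$ is generated by $(m,S_X(p))\sim(n,S_X(q))$ whenever $m,n\in N$ differ by exactly $1$ in exactly one coordinate and $(m+p)/3=(n+q)/3$; $n\otimes x$ is the class of $(n,x)$. With $d((a,u),(b,v))=\frac13 d_X(u,v)$ if $a=b$ and $2$ otherwise, $N\otimes X$ gets the quotient metric (infimum over finite chains of sums of consecutive distances, $\sim$-related consecutive pairs counting $0$). $S_{N\otimes X}(p)=n\otimes S_X(3p-n)$ for any $n\in N$ with $p\in(n+[0,1]^2)/3$; $(N\otimes f)(n\otimes x)=n\otimes f(x)$. $U_0=[0,1]^2$ with the taxicab metric $d((x,y),(x',y'))=|x-x'|+|y-y'|$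 and $S_{U_0}$ the inclusion of $M_0$. $\alpha_N\colon N\otimes U_0\to U_0$, $\alpha_N(n\otimes z)=\frac13(n+z)$ (an isomorphism). An algebra $(A,a\colon FA\to A)$ is corecursive if for every coalgebra $e\colon X\to FX$ there is a unique morphism $e^\dagger\colon X\to A$ with $e^\dagger=a\circ Fe^\dagger\circ e$. A final coalgebra admits a unique coalgebra morphism from every coalgebra. *)

theory Defs
  imports Complex_Main
begin

definition M0 :: "(real \<times> real) set" where
  "M0 = {(r,s). 0 \<le> r \<and> r \<le> 1 \<and> 0 \<le> s \<and> s \<le> 1 \<and> (r \<in> {0,1} \<or> s \<in> {0,1})}"

definition metric_on :: "'a set \<Rightarrow> ('a \<Rightarrow> 'a \<Rightarrow> real) \<Rightarrow> bool" where
  "metric_on X d \<longleftrightarrow>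
     (\<forall>x\<in>X. \<forall>y\<in>X. 0 \<le> d x y \<and> (d x y = 0 \<longleftrightarrow> x = y) \<and> d x y = d y x) \<and>
     (\<forall>x\<in>X. \<forall>y\<in>X. \<forall>z\<in>X. d x z \<le> d x y + d y z)"

definition square_ms :: "'a set \<Rightarrow> ('a \<Rightarrow> 'a \<Rightarrow> real) \<Rightarrow> (real \<times> real \<Rightarrow> 'a) \<Rightarrow> bool" where
  "square_ms X d S \<longleftrightarrow>
     metric_on X d \<and> (\<forall>x\<in>X. \<forall>y\<in>X. d x y \<le> 2) \<and>
     S ` M0 \<subseteq> X \<and> inj_on S M0 \<and>
     (\<forall>i\<in>{0,1}. \<forall>r\<in>{0..1}. \<forall>s\<in>{0..1}.
        d (S (i,r)) (S (i,s)) = \<bar>s - r\<bar> \<and> d (S (r,i)) (S (s,i)) = \<bar>s - r\<bar>) \<and>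
     (\<forall>p\<in>M0. \<forall>q\<in>M0. d (S p) (S q) \<ge> \<bar>fst p - fst q\<bar> + \<bar>snd p - snd q\<bar>)"

definition sq_morphism ::
  "'a set \<Rightarrow> ('a \<Rightarrow> 'a \<Rightarrow> real) \<Rightarrow> (real \<times> real \<Rightarrow> 'a) \<Rightarrow>
   'b set \<Rightarrow> ('b \<Rightarrow> 'b \<Rightarrow> real) \<Rightarrow> (real \<times> real \<Rightarrow> 'b) \<Rightarrow> ('a \<Rightarrow> 'b) \<Rightarrow> bool" where
  "sq_morphism X dX SX Y dY SY f \<longleftrightarrow>
     f ` X \<subseteq> Y \<and> (\<forall>x\<in>X. \<forall>y\<in>X. dY (f x) (f y) \<le> dX x y) \<and> (\<forall>p\<in>M0. f (SX p) = SY p)"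

definition Nidx :: "(nat \<times> nat) set" where
  "Nidx = {0,1,2} \<times> {0,1,2}"

definition adjacent :: "nat \<times> nat \<Rightarrow> nat \<times> nat \<Rightarrow> bool" where
  "adjacent m n \<longleftrightarrow>
     (fst m = fst n \<and> (snd m = snd n + 1 \<or> snd n = snd m + 1)) \<or>
     (snd m = snd n \<and> (fst m = fst n + 1 \<or> fst n = fst m + 1))"

definition gen_rel :: "'a set \<Rightarrow> (real \<times> real \<Rightarrow> 'a) \<Rightarrow> (((nat \<times> nat) \<times> 'a) \<times> ((nat \<times> nat) \<times> 'a)) set" where
  "gen_rel X S = {((m,u),(n,v)). m \<in> Nidx \<and> n \<in> Nidx \<and> u \<in> X \<and> v \<in> X \<and> adjacent m n \<and>
      (\<exists>p\<in>M0. \<exists>q\<in>M0. u = S p \<and> v = S q \<and>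
         (real (fst m) + fst p) / 3 = (real (fst n) + fst q) / 3 \<and>
         (real (snd m) + snd p) / 3 = (real (snd n) + snd q) / 3)}"

definition tensor_rel :: "'a set \<Rightarrow> (real \<times> real \<Rightarrow> 'a) \<Rightarrow> (((nat \<times> nat) \<times> 'a) \<times> ((nat \<times> nat) \<times> 'a)) set" where
  "tensor_rel X S = Id_on (Nidx \<times> X) \<union> (gen_rel X S \<union> (gen_rel X S)\<inverse>)\<^sup>+"

definition tensor_carrier :: "'a set \<Rightarrow> (real \<times> real \<Rightarrow> 'a) \<Rightarrow> ((nat \<times> nat) \<times> 'a) set set" where
  "tensor_carrier X S = (Nidx \<times> X) // tensor_rel X S"

definition tensor_class :: "'a set \<Rightarrow> (real \<times> real \<Rightarrow> 'a) \<Rightarrow> (nat \<times> nat) \<times> 'a \<Rightarrow> ((nat \<times> nat) \<times> 'a) set" where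
  "tensor_class X S z = tensor_rel X S `` {z}"

definition base_dist :: "('a \<Rightarrow> 'a \<Rightarrow> real) \<Rightarrow> (nat \<times> nat) \<times> 'a \<Rightarrow> (nat \<times> nat) \<times> 'a \<Rightarrow> real" where
  "base_dist d a b = (if fst a = fst b then d (snd a) (snd b) / 3 else 2)"

definition chain_cost :: "'a set \<Rightarrow> ('a \<Rightarrow> 'a \<Rightarrow> real) \<Rightarrow> (real \<times> real \<Rightarrow> 'a) \<Rightarrow> ((nat \<times> nat) \<times> 'a) list \<Rightarrow> real" where
  "chain_cost X d S zs =
     sum_list (map2 (\<lambda>a b. if (a, b) \<in> tensor_rel X S then 0 else base_dist d a b) zs (tl zs))"

definition tensor_dist :: "'a set \<Rightarrow> ('a \<Rightarrow> 'a \<Rightarrow> real) \<Rightarrow> (real \<times> real \<Rightarrow> 'a) \<Rightarrow>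
    ((nat \<times> nat) \<times> 'a) set \<Rightarrow> ((nat \<times> nat) \<times> 'a) set \<Rightarrow> real" where
  "tensor_dist X d S c c' =
     Inf {chain_cost X d S zs | zs. zs \<noteq> [] \<and> set zs \<subseteq> Nidx \<times> X \<and> hd zs \<in> c \<and> last zs \<in> c'}"

definition in_cell :: "nat \<times> nat \<Rightarrow> real \<times> real \<Rightarrow> bool" where
  "in_cell n p \<longleftrightarrow>
     real (fst n) \<le> 3 * fst p \<and> 3 * fst p \<le> real (fst n) + 1 \<and>
     real (snd n) \<le> 3 * snd p \<and> 3 * snd p \<le> real (snd n) + 1"

definition cell_of :: "real \<times> real \<Rightarrow> nat \<times> nat" where
  "cell_of p = (SOME n. n \<in> Nidx \<and> in_cell n p)"

definition rescale :: "nat \<times> nat \<Rightarrow> real \<times> real \<Rightarrow> real \<times> real" where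
  "rescale n p = (3 * fst p - real (fst n), 3 * snd p - real (snd n))"

definition tensor_S :: "'a set \<Rightarrow> (real \<times> real \<Rightarrow> 'a) \<Rightarrow> real \<times> real \<Rightarrow> ((nat \<times> nat) \<times> 'a) set" where
  "tensor_S X S p = tensor_class X S (cell_of p, S (rescale (cell_of p) p))"

definition tensor_map :: "'b set \<Rightarrow> (real \<times> real \<Rightarrow> 'b) \<Rightarrow> ('a \<Rightarrow> 'b) \<Rightarrow>
    ((nat \<times> nat) \<times> 'a) set \<Rightarrow> ((nat \<times> nat) \<times> 'b) set" where
  "tensor_map Y SY f c = (let z = (SOME z. z \<in> c) in tensor_class Y SY (fst z, f (snd z)))"

definition U0 :: "(real \<times> real) set" where
  "U0 = {0..1} \<times> {0..1}"

definition taxi :: "real \<times> real \<Rightarrow> real \<times> real \<Rightarrow> real" where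
  "taxi p q = \<bar>fst p - fst q\<bar> + \<bar>snd p - snd q\<bar>"

definition S_U0 :: "real \<times> real \<Rightarrow> real \<times> real" where
  "S_U0 p = p"

definition alphaN :: "((nat \<times> nat) \<times> (real \<times> real)) set \<Rightarrow> real \<times> real" where
  "alphaN c = (let z = (SOME z. z \<in> c) in
      ((real (fst (fst z)) + fst (snd z)) / 3, (real (snd (fst z)) + snd (snd z)) / 3))"

definition alphaN_inv :: "real \<times> real \<Rightarrow> ((nat \<times> nat) \<times> (real \<times> real)) set" where
  "alphaN_inv p = tensor_class U0 S_U0 (cell_of p, rescale (cell_of p) p)"

end

theory Submission
  imports Defs
begin


lemma M0_sub_U0: "p \<in> M0 \<Longrightarrow> p \<in> U0" by (auto simp: M0_def U0_def)

lemma trancl_dom: "(a,b) \<in> (gen_rel X S \<union> (gen_rel X S)\<inverse>)\<^sup>+ \<Longrightarrow> a \<in> Nidx \<times> X \<and> b \<in> Nidx \<times> X"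
  by (induct rule: trancl_induct) (auto simp: gen_rel_def)

lemma trel_dom: "(a,b) \<in> tensor_rel X S \<Longrightarrow> a \<in> Nidx \<times> X \<and> b \<in> Nidx \<times> X"
  unfolding tensor_rel_def using trancl_dom by blast

lemma trel_refl: "a \<in> Nidx \<times> X \<Longrightarrow> (a,a) \<in> tensor_rel X S"
  unfolding tensor_rel_def by auto

lemma trel_sym: "(a,b) \<in> tensor_rel X S \<Longrightarrow> (b,a) \<in> tensor_rel X S"
proof -
  let ?R = "gen_rel X S \<union> (gen_rel X S)\<inverse>"
  have s: "?R\<inverse> = ?R" by auto
  assume "(a,b) \<in> tensor_rel X S"
  then consider "(a,b) \<in> Id_on (Nidx \<times> X)" | "(a,b) \<in> ?R\<^sup>+" unfolding tensor_rel_def by blast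
  then show ?thesis
  proof cases
    case 1 then show ?thesis unfolding tensor_rel_def by auto
  next
    case 2
    then have "(b,a) \<in> (?R\<inverse>)\<^sup>+" by (simp add: trancl_converse)
    then show ?thesis unfolding tensor_rel_def s by auto
  qed
qed

lemma trel_trans: "(a,b) \<in> tensor_rel X S \<Longrightarrow> (b,c) \<in> tensor_rel X S \<Longrightarrow> (a,c) \<in> tensor_rel X S"
  unfolding tensor_rel_def by (auto intro: trancl_trans)

lemma class_mem: "z \<in> tensor_class X S z0 \<longleftrightarrow> (z0, z) \<in> tensor_rel X S"
  by (simp add: tensor_class_def)

lemma class_self: "z0 \<in> Nidx \<times> X \<Longrightarrow> z0 \<in> tensor_class X S z0"
  by (simp add: class_mem trel_refl)

lemma class_rel: "z \<in> tensor_class X S z0 \<Longrightarrow> z' \<in> tensor_class X S z0 \<Longrightarrow> (z, z') \<in> tensor_rel X S"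
  by (meson class_mem trel_sym trel_trans)

lemma class_eq: "(a,b) \<in> tensor_rel X S \<Longrightarrow> tensor_class X S a = tensor_class X S b"
  unfolding tensor_class_def by (auto intro: trel_trans trel_sym)

lemma class_sub: "tensor_class X S z0 \<subseteq> Nidx \<times> X"
  using trel_dom by (fastforce simp: tensor_class_def)

lemma carrier_E: "c \<in> tensor_carrier X S \<Longrightarrow> (\<And>z0. z0 \<in> Nidx \<times> X \<Longrightarrow> c = tensor_class X S z0 \<Longrightarrow> P) \<Longrightarrow> P"
  unfolding tensor_carrier_def tensor_class_def by (auto elim: quotientE)

lemma carrier_I: "z0 \<in> Nidx \<times> X \<Longrightarrow> tensor_class X S z0 \<in> tensor_carrier X S"
  unfolding tensor_carrier_def tensor_class_def by (auto intro: quotientI)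

definition gmap :: "('a \<Rightarrow> real \<times> real) \<Rightarrow> (nat \<times> nat) \<times> 'a \<Rightarrow> real \<times> real" where
  "gmap h z = ((real (fst (fst z)) + fst (h (snd z))) / 3, (real (snd (fst z)) + snd (h (snd z))) / 3)"

lemma gmap_inv:
  assumes hb: "\<forall>p\<in>M0. h (S p) = p" and r: "(a,b) \<in> tensor_rel X S"
  shows "gmap h a = gmap h b"
proof -
  let ?R = "gen_rel X S \<union> (gen_rel X S)\<inverse>"
  have gstep: "gmap h a = gmap h b" if "(a,b) \<in> gen_rel X S" for a b
    using that hb by (auto simp: gen_rel_def gmap_def)
  have "gmap h a = gmap h b" if "(a,b) \<in> ?R\<^sup>+" for a b
    using that
  proof (induct rule: trancl_induct)
    case (base y) then show ?case using gstep[of a y] gstep[of y a] by auto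
  next
    case (step y z) then show ?case using gstep[of y z] gstep[of z y] by auto
  qed
  then show ?thesis using r unfolding tensor_rel_def by blast
qed

lemma gmap_U0: "z \<in> Nidx \<times> X \<Longrightarrow> h z' \<in> U0 \<Longrightarrow> snd z = z' \<Longrightarrow> gmap h z \<in> U0"
  by (auto simp: gmap_def U0_def Nidx_def)

lemma gmap_U0': "z \<in> Nidx \<times> X \<Longrightarrow> \<forall>x\<in>X. h x \<in> U0 \<Longrightarrow> gmap h z \<in> U0"
  by (auto simp: gmap_def U0_def Nidx_def)

lemma alphaN_class:
  assumes "z0 \<in> Nidx \<times> U0"
  shows "alphaN (tensor_class U0 S_U0 z0) = gmap (\<lambda>x. x) z0"
proof -
  let ?c = "tensor_class U0 S_U0 z0"
  have "z0 \<in> ?c" using assms by (rule class_self)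
  then have z: "(SOME z. z \<in> ?c) \<in> ?c" by (rule someI)
  have "gmap (\<lambda>x. x) (SOME z. z \<in> ?c) = gmap (\<lambda>x. x) z0"
    apply (rule gmap_inv[where S=S_U0 and X=U0])
    using class_rel[OF z \<open>z0 \<in> ?c\<close>] by (auto simp: S_U0_def)
  then show ?thesis by (simp add: alphaN_def gmap_def Let_def)
qed

lemma tmap_alpha:
  assumes hU: "\<forall>x\<in>X. h x \<in> U0" and hb: "\<forall>p\<in>M0. h (S p) = p"
    and c: "c \<in> tensor_carrier X S" and z: "z \<in> c"
  shows "alphaN (tensor_map U0 S_U0 h c) = gmap h z"
proof -
  have z0: "(SOME z. z \<in> c) \<in> c" using z by (rule someI)
  obtain w where w: "w \<in> Nidx \<times> X" "c = tensor_class X S w" using c by (rule carrier_E)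
  have zA: "(SOME z. z \<in> c) \<in> Nidx \<times> X" using z0 w class_sub by blast
  have r: "((SOME z. z \<in> c), z) \<in> tensor_rel X S" using z0 z w class_rel by blast
  have "alphaN (tensor_map U0 S_U0 h c) = gmap (\<lambda>x. x) (fst (SOME z. z \<in> c), h (snd (SOME z. z \<in> c)))"
    unfolding tensor_map_def Let_def
    apply (rule alphaN_class) using zA hU by auto
  also have "\<dots> = gmap h (SOME z. z \<in> c)" by (simp add: gmap_def)
  also have "\<dots> = gmap h z" using gmap_inv[OF hb r] .
  finally show ?thesis .
qed

lemma tmap_carrier:
  assumes hU: "\<forall>x\<in>X. h x \<in> U0" and c: "c \<in> tensor_carrier X S"
  shows "tensor_map U0 S_U0 h c \<in> tensor_carrier U0 S_U0"
proof -
  obtain w where w: "w \<in> Nidx \<times> X" "c = tensor_class X S w" using c by (rule carrier_E)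
  have "w \<in> c" using w class_self by blast
  then have z0: "(SOME z. z \<in> c) \<in> c" by (rule someI)
  have zA: "(SOME z. z \<in> c) \<in> Nidx \<times> X" using z0 w class_sub by blast
  show ?thesis unfolding tensor_map_def Let_def
    apply (rule carrier_I) using zA hU by auto
qed


lemma cell_exists: "p \<in> U0 \<Longrightarrow> \<exists>n. n \<in> Nidx \<and> in_cell n p"
proof -
  assume p: "p \<in> U0"
  define i :: nat where "i = (if 3 * fst p < 1 then 0 else if 3 * fst p < 2 then 1 else 2)"
  define j :: nat where "j = (if 3 * snd p < 1 then 0 else if 3 * snd p < 2 then 1 else 2)"
  have "(i,j) \<in> Nidx \<and> in_cell (i,j) p"
    using p by (auto simp: i_def j_def Nidx_def in_cell_def U0_def)
  then show ?thesis by blast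
qed

lemma cell_of: "p \<in> U0 \<Longrightarrow> cell_of p \<in> Nidx \<and> in_cell (cell_of p) p"
  unfolding cell_of_def using cell_exists by (rule someI_ex)

lemma rescale_U0: "in_cell n p \<Longrightarrow> rescale n p \<in> U0"
  by (auto simp: in_cell_def rescale_def U0_def)

lemma gmap_rescale: "gmap (\<lambda>x. x) (n, rescale n p) = p"
  by (simp add: gmap_def rescale_def)

lemma rescale_M0: "p \<in> M0 \<Longrightarrow> n \<in> Nidx \<Longrightarrow> in_cell n p \<Longrightarrow> rescale n p \<in> M0"
  by (auto simp: M0_def Nidx_def in_cell_def rescale_def)

lemma taxi_tri: "taxi a c \<le> taxi a b + taxi b c"
  by (simp add: taxi_def)

lemma taxi_self: "taxi a a = 0" by (simp add: taxi_def)
lemma taxi_sym: "taxi a b = taxi b a" by (simp add: taxi_def)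
lemma taxi_nonneg: "taxi a b \<ge> 0" by (simp add: taxi_def)

lemma taxi_U0: "a \<in> U0 \<Longrightarrow> b \<in> U0 \<Longrightarrow> taxi a b \<le> 2"
  by (auto simp: taxi_def U0_def)

lemma chain_cons: "chain_cost X d S (a # b # zs) =
   (if (a,b) \<in> tensor_rel X S then 0 else base_dist d a b) + chain_cost X d S (b # zs)"
  by (simp add: chain_cost_def)

lemma chain_single: "chain_cost X d S [a] = 0"
  by (simp add: chain_cost_def)

lemma chain_step:
  assumes hU: "\<forall>x\<in>X. h x \<in> U0" and hb: "\<forall>p\<in>M0. h (S p) = p"
    and hs: "\<forall>x\<in>X. \<forall>y\<in>X. taxi (h x) (h y) \<le> d x y"
    and a: "a \<in> Nidx \<times> X" and b: "b \<in> Nidx \<times> X"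
  shows "taxi (gmap h a) (gmap h b) \<le> (if (a,b) \<in> tensor_rel X S then 0 else base_dist d a b)"
proof (cases "(a,b) \<in> tensor_rel X S")
  case True then show ?thesis using gmap_inv[OF hb True] by (simp add: taxi_self)
next
  case False
  show ?thesis
  proof (cases "fst a = fst b")
    case True
    have "taxi (gmap h a) (gmap h b) = taxi (h (snd a)) (h (snd b)) / 3"
    proof -
      have q: "\<bar>(r + u)/3 - (r + v)/3\<bar> = \<bar>u - v\<bar>/3" for r u v :: real
        by (simp add: abs_divide[symmetric] diff_divide_distrib[symmetric])
      show ?thesis using True by (simp only: gmap_def taxi_def fst_conv snd_conv q) (simp add: add_divide_distrib)
    qed
    also have "\<dots> \<le> d (snd a) (snd b) / 3" using hs a b by auto
    finally show ?thesis using False True by (simp add: base_dist_def)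
  next
    case F2: False
    have "taxi (gmap h a) (gmap h b) \<le> 2" using gmap_U0'[OF a hU] gmap_U0'[OF b hU] by (rule taxi_U0)
    then show ?thesis using False F2 by (simp add: base_dist_def)
  qed
qed

lemma chain_bound:
  assumes hU: "\<forall>x\<in>X. h x \<in> U0" and hb: "\<forall>p\<in>M0. h (S p) = p"
    and hs: "\<forall>x\<in>X. \<forall>y\<in>X. taxi (h x) (h y) \<le> d x y"
  shows "zs \<noteq> [] \<Longrightarrow> set zs \<subseteq> Nidx \<times> X \<Longrightarrow>
     taxi (gmap h (hd zs)) (gmap h (last zs)) \<le> chain_cost X d S zs"
proof (induct zs)
  case Nil then show ?case by simp
next
  case (Cons a zs)
  show ?case
  proof (cases zs)
    case Nil then show ?thesis by (simp add: chain_single taxi_self)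
  next
    case (Cons b ws)
    have ih: "taxi (gmap h b) (gmap h (last zs)) \<le> chain_cost X d S zs"
      using Cons.hyps Cons.prems Cons by simp
    have st: "taxi (gmap h a) (gmap h b) \<le> (if (a,b) \<in> tensor_rel X S then 0 else base_dist d a b)"
      apply (rule chain_step[OF hU hb hs]) using Cons.prems Cons by auto
    have e1: "last (a # zs) = last zs" "hd (a # zs) = a" using Cons by auto
    have e2: "chain_cost X d S (a # zs) = (if (a,b) \<in> tensor_rel X S then 0 else base_dist d a b) + chain_cost X d S zs"
      unfolding Cons by (rule chain_cons)
    show ?thesis unfolding e1 e2 using taxi_tri[where a="gmap h a" and b="gmap h b" and c="gmap h (last zs)"] ih st
      by linarith
  qed
qed

lemma tdist_lower:
  assumes hU: "\<forall>x\<in>X. h x \<in> U0" and hb: "\<forall>p\<in>M0. h (S p) = p"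
    and hs: "\<forall>x\<in>X. \<forall>y\<in>X. taxi (h x) (h y) \<le> d x y"
    and c: "c \<in> tensor_carrier X S" and c': "c' \<in> tensor_carrier X S"
    and z: "z \<in> c" and z': "z' \<in> c'"
  shows "taxi (gmap h z) (gmap h z') \<le> tensor_dist X d S c c'"
proof -
  obtain w where w: "w \<in> Nidx \<times> X" "c = tensor_class X S w" using c by (rule carrier_E)
  obtain w' where w': "w' \<in> Nidx \<times> X" "c' = tensor_class X S w'" using c' by (rule carrier_E)
  have zA: "z \<in> Nidx \<times> X" "z' \<in> Nidx \<times> X" using z z' w w' class_sub by blast+
  show ?thesis unfolding tensor_dist_def
  proof (rule cInf_greatest)
    show "{chain_cost X d S zs |zs. zs \<noteq> [] \<and> set zs \<subseteq> Nidx \<times> X \<and> hd zs \<in> c \<and> last zs \<in> c'} \<noteq> {}"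
      using zA z z' by (auto intro!: exI[of _ "[z, z']"])
  next
    fix r assume "r \<in> {chain_cost X d S zs |zs. zs \<noteq> [] \<and> set zs \<subseteq> Nidx \<times> X \<and> hd zs \<in> c \<and> last zs \<in> c'}"
    then obtain zs where zs: "r = chain_cost X d S zs" "zs \<noteq> []" "set zs \<subseteq> Nidx \<times> X" "hd zs \<in> c" "last zs \<in> c'"
      by blast
    have "(hd zs, z) \<in> tensor_rel X S" using class_rel zs(4) z w(2) by metis
    then have "gmap h (hd zs) = gmap h z" by (rule gmap_inv[where h=h and S=S, OF hb])
    moreover have "(last zs, z') \<in> tensor_rel X S" using class_rel zs(5) z' w'(2) by metis
    then have "gmap h (last zs) = gmap h z'" by (rule gmap_inv[where h=h and S=S, OF hb])
    ultimately show "taxi (gmap h z) (gmap h z') \<le> r" using chain_bound[OF hU hb hs zs(2,3)] zs(1) by simp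
  qed
qed

lemma part1: "sq_morphism (tensor_carrier U0 S_U0) (tensor_dist U0 taxi S_U0) (tensor_S U0 S_U0)
               U0 taxi S_U0 alphaN"
proof -
  have hU: "\<forall>x\<in>U0. (\<lambda>x. x) x \<in> U0" by simp
  have hb: "\<forall>p\<in>M0. (\<lambda>x. x) (S_U0 p) = p" by (simp add: S_U0_def)
  have hs: "\<forall>x\<in>U0. \<forall>y\<in>U0. taxi ((\<lambda>x. x) x) ((\<lambda>x. x) y) \<le> taxi x y" by simp
  have img: "alphaN c \<in> U0" if c: "c \<in> tensor_carrier U0 S_U0" for c
  proof -
    obtain w where w: "w \<in> Nidx \<times> U0" "c = tensor_class U0 S_U0 w" using c by (rule carrier_E)
    show ?thesis using alphaN_class[OF w(1)] gmap_U0'[OF w(1), of "\<lambda>x. x"] w by simp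
  qed
  have sh: "taxi (alphaN c) (alphaN c') \<le> tensor_dist U0 taxi S_U0 c c'"
    if c: "c \<in> tensor_carrier U0 S_U0" and c': "c' \<in> tensor_carrier U0 S_U0" for c c'
  proof -
    obtain w where w: "w \<in> Nidx \<times> U0" "c = tensor_class U0 S_U0 w" using c by (rule carrier_E)
    obtain w' where w': "w' \<in> Nidx \<times> U0" "c' = tensor_class U0 S_U0 w'" using c' by (rule carrier_E)
    have wc: "w \<in> c" "w' \<in> c'" using class_self[OF w(1)] class_self[OF w'(1)] w(2) w'(2) by auto
    show ?thesis using tdist_lower[where h="\<lambda>x. x" and X=U0 and S=S_U0 and d=taxi, OF hU hb hs c c' wc]
       alphaN_class[OF w(1)] alphaN_class[OF w'(1)] w w' by simp
  qed
  have bd: "alphaN (tensor_S U0 S_U0 p) = S_U0 p" if p: "p \<in> M0" for p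
  proof -
    have pU: "p \<in> U0" using p by (rule M0_sub_U0)
    have "(cell_of p, rescale (cell_of p) p) \<in> Nidx \<times> U0" using cell_of[OF pU] rescale_U0 by blast
    then show ?thesis unfolding tensor_S_def using alphaN_class gmap_rescale by (simp add: S_U0_def)
  qed
  show ?thesis unfolding sq_morphism_def using img sh bd by auto
qed


lemma near: "in_cell n p \<Longrightarrow> in_cell m p \<Longrightarrow> fst n \<le> fst m + 1 \<and> snd n \<le> snd m + 1"
proof -
  assume a: "in_cell n p" "in_cell m p"
  then have "real (fst n) \<le> real (fst m + 1)" "real (snd n) \<le> real (snd m + 1)"
    by (auto simp: in_cell_def)
  then show ?thesis by linarith
qed

lemma M0I: "x \<in> U0 \<Longrightarrow> fst x = 0 \<or> fst x = 1 \<or> snd x = 0 \<or> snd x = 1 \<Longrightarrow> x \<in> M0"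
  by (auto simp: U0_def M0_def)

lemma adjM:
  assumes "in_cell n p" "in_cell m p" "adjacent n m"
  shows "rescale n p \<in> M0 \<and> rescale m p \<in> M0"
proof -
  have U: "rescale n p \<in> U0" "rescale m p \<in> U0" using assms rescale_U0 by auto
  have c: "real (fst n) \<le> 3 * fst p" "3 * fst p \<le> real (fst n) + 1" "real (snd n) \<le> 3 * snd p" "3 * snd p \<le> real (snd n) + 1"
     "real (fst m) \<le> 3 * fst p" "3 * fst p \<le> real (fst m) + 1" "real (snd m) \<le> 3 * snd p" "3 * snd p \<le> real (snd m) + 1"
    using assms(1,2) by (auto simp: in_cell_def)
  consider "snd m = snd n + 1" | "snd n = snd m + 1" | "fst m = fst n + 1" | "fst n = fst m + 1"
    using assms(3) unfolding adjacent_def by blast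
  then show ?thesis
  proof cases
    case 1
    then have "real (snd m) = real (snd n) + 1" by simp
    then have "snd (rescale n p) = 1" "snd (rescale m p) = 0" using c by (simp_all add: rescale_def)
    then show ?thesis using U M0I by auto
  next
    case 2
    then have "real (snd n) = real (snd m) + 1" by simp
    then have "snd (rescale m p) = 1" "snd (rescale n p) = 0" using c by (simp_all add: rescale_def)
    then show ?thesis using U M0I by auto
  next
    case 3
    then have "real (fst m) = real (fst n) + 1" by simp
    then have "fst (rescale n p) = 1" "fst (rescale m p) = 0" using c by (simp_all add: rescale_def)
    then show ?thesis using U M0I by auto
  next
    case 4
    then have "real (fst n) = real (fst m) + 1" by simp
    then have "fst (rescale m p) = 1" "fst (rescale n p) = 0" using c by (simp_all add: rescale_def)
    then show ?thesis using U M0I by auto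
  qed
qed

lemma adj_gen:
  assumes "n \<in> Nidx" "m \<in> Nidx" "in_cell n p" "in_cell m p" "adjacent n m"
  shows "((n, rescale n p), (m, rescale m p)) \<in> gen_rel U0 S_U0"
proof -
  have U: "rescale n p \<in> U0" "rescale m p \<in> U0" using assms rescale_U0 by auto
  have M: "rescale n p \<in> M0" "rescale m p \<in> M0" using adjM[OF assms(3-5)] by auto
  have e: "(real (fst n) + fst (rescale n p)) / 3 = (real (fst m) + fst (rescale m p)) / 3"
     "(real (snd n) + snd (rescale n p)) / 3 = (real (snd m) + snd (rescale m p)) / 3"
    by (simp_all add: rescale_def)
  have "\<exists>p'\<in>M0. \<exists>q'\<in>M0. rescale n p = S_U0 p' \<and> rescale m p = S_U0 q' \<and>
         (real (fst n) + fst p') / 3 = (real (fst m) + fst q') / 3 \<and>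
         (real (snd n) + snd p') / 3 = (real (snd m) + snd q') / 3"
    using M e unfolding S_U0_def by blast
  then show ?thesis unfolding gen_rel_def using assms U by blast
qed
lemma gen_trel: "(a,b) \<in> gen_rel X S \<Longrightarrow> (a,b) \<in> tensor_rel X S"
  unfolding tensor_rel_def by (intro UnI2 r_into_trancl UnI1)

lemma K:
  assumes n: "n \<in> Nidx" and m: "m \<in> Nidx" and cn: "in_cell n p" and cm: "in_cell m p"
  shows "((n, rescale n p), (m, rescale m p)) \<in> tensor_rel U0 S_U0"
proof -
  have A: "(n, rescale n p) \<in> Nidx \<times> U0" using n rescale_U0[OF cn] by simp
  have nb1: "fst n \<le> fst m + 1 \<and> snd n \<le> snd m + 1" by (rule near[OF cn cm])
  have nb2: "fst m \<le> fst n + 1 \<and> snd m \<le> snd n + 1" by (rule near[OF cm cn])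
  show ?thesis
  proof (cases "n = m")
    case True then show ?thesis using trel_refl[OF A] by simp
  next
    case False
    show ?thesis
    proof (cases "adjacent n m")
      case True
      then show ?thesis by (rule gen_trel[OF adj_gen[OF n m cn cm]])
    next
      case F2: False
      define k where "k = (fst n, snd m)"
      have sn: "snd n \<noteq> snd m"
      proof
        assume e: "snd n = snd m"
        then have "fst n \<noteq> fst m" using False by (simp add: prod_eq_iff)
        then have "fst n = fst m + 1 \<or> fst m = fst n + 1" using nb1 nb2 by linarith
        then have "adjacent n m" using e by (simp add: adjacent_def)
        then show False using F2 by simp
      qed
      have fn: "fst n \<noteq> fst m"
      proof
        assume e: "fst n = fst m"
        then have "snd n = snd m + 1 \<or> snd m = snd n + 1" using nb1 nb2 sn by linarith
        then have "adjacent n m" using e by (simp add: adjacent_def)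
        then show False using F2 by simp
      qed
      have s1: "snd n = snd m + 1 \<or> snd m = snd n + 1" using nb1 nb2 sn by linarith
      have f1: "fst n = fst m + 1 \<or> fst m = fst n + 1" using nb1 nb2 fn by linarith
      have adj1: "adjacent n k" using s1 unfolding k_def adjacent_def by simp
      have adj2: "adjacent k m" using f1 unfolding k_def adjacent_def by simp
      have k1: "k \<in> Nidx" using n m unfolding k_def Nidx_def mem_Times_iff fst_conv snd_conv by blast
      have k2: "in_cell k p" using cn cm unfolding k_def in_cell_def by simp
      show ?thesis
        by (rule trel_trans[OF gen_trel[OF adj_gen[OF n k1 cn k2 adj1]] gen_trel[OF adj_gen[OF k1 m k2 cm adj2]]])
    qed
  qed
qed

lemma ainv_mem:
  assumes "a \<in> U0" "n \<in> Nidx" "in_cell n a"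
  shows "(n, rescale n a) \<in> alphaN_inv a"
  unfolding alphaN_inv_def class_mem using K cell_of assms by blast

lemma ainv_carrier: "a \<in> U0 \<Longrightarrow> alphaN_inv a \<in> tensor_carrier U0 S_U0"
  unfolding alphaN_inv_def using cell_of rescale_U0 by (blast intro: carrier_I)

lemma chain_nonneg: "chain_cost U0 taxi S_U0 zs \<ge> 0"
proof (induct zs)
  case Nil then show ?case by (simp add: chain_cost_def)
next
  case (Cons a zs)
  then show ?case
    by (cases zs) (auto simp: chain_single chain_cons base_dist_def taxi_nonneg)
qed

lemma chain_append: "zs \<noteq> [] \<Longrightarrow> ws \<noteq> [] \<Longrightarrow> chain_cost X d S (zs @ ws) =
   chain_cost X d S zs + (if (last zs, hd ws) \<in> tensor_rel X S then 0 else base_dist d (last zs) (hd ws))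
   + chain_cost X d S ws"
proof (induct zs)
  case Nil then show ?case by simp
next
  case (Cons a zs)
  show ?case
  proof (cases zs)
    case Nil then show ?thesis using Cons.prems by (cases ws) (simp_all add: chain_cons chain_single)
  next
    case (Cons b vs)
    then show ?thesis using Cons.hyps Cons.prems by (simp add: chain_cons)
  qed
qed

abbreviation "chs c c' \<equiv> {chain_cost U0 taxi S_U0 zs |zs. zs \<noteq> [] \<and> set zs \<subseteq> Nidx \<times> U0 \<and> hd zs \<in> c \<and> last zs \<in> c'}"

lemma chs_bdd: "bdd_below (chs c c')"
  using chain_nonneg by (auto intro!: bdd_belowI[of _ 0])

lemma chains_ne: "c \<in> tensor_carrier U0 S_U0 \<Longrightarrow> c' \<in> tensor_carrier U0 S_U0 \<Longrightarrow> chs c c' \<noteq> {}"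
proof -
  assume c: "c \<in> tensor_carrier U0 S_U0" and c': "c' \<in> tensor_carrier U0 S_U0"
  obtain w where w: "w \<in> Nidx \<times> U0" "c = tensor_class U0 S_U0 w" using c by (rule carrier_E)
  obtain w' where w': "w' \<in> Nidx \<times> U0" "c' = tensor_class U0 S_U0 w'" using c' by (rule carrier_E)
  have "w \<in> c" "w' \<in> c'" using class_self[OF w(1)] class_self[OF w'(1)] w(2) w'(2) by auto
  then have "chain_cost U0 taxi S_U0 [w, w'] \<in> chs c c'" using w(1) w'(1)
    by (intro CollectI exI[where x="[w, w']"]) auto
  then show ?thesis by blast
qed

lemma tdist_tri:
  assumes c: "c \<in> tensor_carrier U0 S_U0" and c': "c' \<in> tensor_carrier U0 S_U0"
    and c'': "c'' \<in> tensor_carrier U0 S_U0"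
  shows "tensor_dist U0 taxi S_U0 c c'' \<le> tensor_dist U0 taxi S_U0 c c' + tensor_dist U0 taxi S_U0 c' c''"
proof -
  obtain w' where w': "w' \<in> Nidx \<times> U0" "c' = tensor_class U0 S_U0 w'" using c' by (rule carrier_E)
  have key: "tensor_dist U0 taxi S_U0 c c'' \<le> chain_cost U0 taxi S_U0 zs + chain_cost U0 taxi S_U0 ws"
    if zs: "zs \<noteq> []" "set zs \<subseteq> Nidx \<times> U0" "hd zs \<in> c" "last zs \<in> c'"
    and ws: "ws \<noteq> []" "set ws \<subseteq> Nidx \<times> U0" "hd ws \<in> c'" "last ws \<in> c''" for zs ws
  proof -
    have r: "(last zs, hd ws) \<in> tensor_rel U0 S_U0" using class_rel zs(4) ws(3) w'(2) by metis
    have "chain_cost U0 taxi S_U0 (zs @ ws) \<in> chs c c''" using zs ws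
      by (intro CollectI exI[where x="zs @ ws"]) auto
    then have "tensor_dist U0 taxi S_U0 c c'' \<le> chain_cost U0 taxi S_U0 (zs @ ws)"
      unfolding tensor_dist_def by (rule cInf_lower[OF _ chs_bdd])
    also have "\<dots> = chain_cost U0 taxi S_U0 zs + chain_cost U0 taxi S_U0 ws"
      using chain_append[OF zs(1) ws(1)] r by simp
    finally show ?thesis .
  qed
  have step2: "tensor_dist U0 taxi S_U0 c c'' - chain_cost U0 taxi S_U0 ws \<le> tensor_dist U0 taxi S_U0 c c'"
    if ws: "ws \<noteq> []" "set ws \<subseteq> Nidx \<times> U0" "hd ws \<in> c'" "last ws \<in> c''" for ws
    unfolding tensor_dist_def[of U0 taxi S_U0 c c']
    apply (rule cInf_greatest[OF chains_ne[OF c c']])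
    using key[OF _ _ _ _ ws] by fastforce
  have "tensor_dist U0 taxi S_U0 c c'' - tensor_dist U0 taxi S_U0 c c' \<le> tensor_dist U0 taxi S_U0 c' c''"
    unfolding tensor_dist_def[of U0 taxi S_U0 c' c'']
    apply (rule cInf_greatest[OF chains_ne[OF c' c'']])
    using step2 by fastforce
  then show ?thesis by linarith
qed

lemma l3: "\<bar>(3*x - c) - (3*y - c)\<bar> = 3 * \<bar>x - y\<bar>" for x y c :: real
proof -
  have "(3*x - c) - (3*y - c) = 3*(x-y)" by simp
  then have "\<bar>(3*x - c) - (3*y - c)\<bar> = \<bar>3*(x-y)\<bar>" by (simp only:)
  then show ?thesis by (simp only: abs_mult)
qed

lemma taxi_rescale: "taxi (rescale n a) (rescale n b) = 3 * taxi a b"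
  unfolding taxi_def rescale_def fst_conv snd_conv l3 by simp

lemma W:
  assumes a: "a \<in> U0" and b: "b \<in> U0" and n: "n \<in> Nidx" and ca: "in_cell n a" and cb: "in_cell n b"
  shows "tensor_dist U0 taxi S_U0 (alphaN_inv a) (alphaN_inv b) \<le> taxi a b"
proof -
  let ?zs = "[(n, rescale n a), (n, rescale n b)]"
  have m: "?zs \<noteq> [] \<and> set ?zs \<subseteq> Nidx \<times> U0 \<and> hd ?zs \<in> alphaN_inv a \<and> last ?zs \<in> alphaN_inv b"
    using ainv_mem[OF a n ca] ainv_mem[OF b n cb] n rescale_U0[OF ca] rescale_U0[OF cb] by simp
  then have "chain_cost U0 taxi S_U0 ?zs \<in> chs (alphaN_inv a) (alphaN_inv b)" by blast
  then have "tensor_dist U0 taxi S_U0 (alphaN_inv a) (alphaN_inv b) \<le> chain_cost U0 taxi S_U0 ?zs"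
    unfolding tensor_dist_def by (rule cInf_lower[OF _ chs_bdd])
  also have "\<dots> \<le> base_dist taxi (n, rescale n a) (n, rescale n b)"
  proof -
    have "base_dist taxi (n, rescale n a) (n, rescale n b) \<ge> 0"
      by (simp add: base_dist_def taxi_nonneg)
    then show ?thesis by (simp only: chain_cons chain_single) simp
  qed
  also have "\<dots> = taxi a b"
    by (simp add: base_dist_def taxi_rescale)
  finally show ?thesis .
qed


definition samecol :: "real \<Rightarrow> real \<Rightarrow> bool" where
  "samecol x y \<longleftrightarrow> (\<exists>i::nat. i \<le> 2 \<and> real i \<le> 3*x \<and> 3*x \<le> real i + 1 \<and> real i \<le> 3*y \<and> 3*y \<le> real i + 1)"

lemma samecol_I:
  assumes "0 \<le> x" "x \<le> 1" "0 \<le> y" "y \<le> 1"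
    "(x \<le> 1/3 \<and> y \<le> 1/3) \<or> (1/3 \<le> x \<and> x \<le> 2/3 \<and> 1/3 \<le> y \<and> y \<le> 2/3) \<or> (2/3 \<le> x \<and> 2/3 \<le> y)"
  shows "samecol x y"
  unfolding samecol_def
proof -
  consider "x \<le> 1/3 \<and> y \<le> 1/3" | "1/3 \<le> x \<and> x \<le> 2/3 \<and> 1/3 \<le> y \<and> y \<le> 2/3" | "2/3 \<le> x \<and> 2/3 \<le> y"
    using assms(5) by blast
  then show "\<exists>i::nat. i \<le> 2 \<and> real i \<le> 3*x \<and> 3*x \<le> real i + 1 \<and> real i \<le> 3*y \<and> 3*y \<le> real i + 1"
  proof cases
    case 1 then show ?thesis using assms by (intro exI[of _ 0]) auto
  next
    case 2 then show ?thesis using assms by (intro exI[of _ 1]) auto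
  next
    case 3 then show ?thesis using assms by (intro exI[of _ 2]) auto
  qed
qed

lemma samecol_refl: "0 \<le> x \<Longrightarrow> x \<le> 1 \<Longrightarrow> samecol x x"
  by (rule samecol_I) auto

lemma oneD:
  assumes "0 \<le> s" "s \<le> 1" "0 \<le> t" "t \<le> 1"
  shows "\<exists>w1 w2. 0 \<le> w1 \<and> w1 \<le> 1 \<and> 0 \<le> w2 \<and> w2 \<le> 1 \<and>
     \<bar>s - w1\<bar> + \<bar>w1 - w2\<bar> + \<bar>w2 - t\<bar> = \<bar>s - t\<bar> \<and> samecol s w1 \<and> samecol w1 w2 \<and> samecol w2 t"
proof (cases "s \<le> t")
  case True
  define w1 where "w1 = max s (min t (1/3))"
  define w2 where "w2 = max s (min t (2/3))"
  have "samecol s w1" by (rule samecol_I) (use assms True in \<open>auto simp: w1_def max_def min_def\<close>)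
  moreover have "samecol w1 w2" by (rule samecol_I) (use assms True in \<open>auto simp: w1_def w2_def max_def min_def\<close>)
  moreover have "samecol w2 t" by (rule samecol_I) (use assms True in \<open>auto simp: w2_def max_def min_def\<close>)
  moreover have "\<bar>s - w1\<bar> + \<bar>w1 - w2\<bar> + \<bar>w2 - t\<bar> = \<bar>s - t\<bar>"
    using assms True by (auto simp: w1_def w2_def max_def min_def)
  moreover have "0 \<le> w1 \<and> w1 \<le> 1 \<and> 0 \<le> w2 \<and> w2 \<le> 1"
    using assms True by (auto simp: w1_def w2_def max_def min_def)
  ultimately show ?thesis by blast
next
  case False
  define w1 where "w1 = max t (min s (2/3))"
  define w2 where "w2 = max t (min s (1/3))"
  have "samecol s w1" by (rule samecol_I) (use assms False in \<open>auto simp: w1_def max_def min_def\<close>)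
  moreover have "samecol w1 w2" by (rule samecol_I) (use assms False in \<open>auto simp: w1_def w2_def max_def min_def\<close>)
  moreover have "samecol w2 t" by (rule samecol_I) (use assms False in \<open>auto simp: w2_def max_def min_def\<close>)
  moreover have "\<bar>s - w1\<bar> + \<bar>w1 - w2\<bar> + \<bar>w2 - t\<bar> = \<bar>s - t\<bar>"
    using assms False by (auto simp: w1_def w2_def max_def min_def)
  moreover have "0 \<le> w1 \<and> w1 \<le> 1 \<and> 0 \<le> w2 \<and> w2 \<le> 1"
    using assms False by (auto simp: w1_def w2_def max_def min_def)
  ultimately show ?thesis by blast
qed


lemma Hstep:
  assumes a: "a \<in> U0" and b: "b \<in> U0" and c1: "samecol (fst a) (fst b)" and c2: "samecol (snd a) (snd b)"
  shows "tensor_dist U0 taxi S_U0 (alphaN_inv a) (alphaN_inv b) \<le> taxi a b"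
proof -
  obtain i where i: "i \<le> 2" "real i \<le> 3 * fst a" "3 * fst a \<le> real i + 1" "real i \<le> 3 * fst b" "3 * fst b \<le> real i + 1"
    using c1 unfolding samecol_def by blast
  obtain j where j: "j \<le> 2" "real j \<le> 3 * snd a" "3 * snd a \<le> real j + 1" "real j \<le> 3 * snd b" "3 * snd b \<le> real j + 1"
    using c2 unfolding samecol_def by blast
  have n: "(i,j) \<in> Nidx" using i(1) j(1) by (auto simp: Nidx_def)
  show ?thesis apply (rule W[OF a b n]) using i j by (auto simp: in_cell_def)
qed

lemma ainv_short:
  assumes p: "p \<in> U0" and q: "q \<in> U0"
  shows "tensor_dist U0 taxi S_U0 (alphaN_inv p) (alphaN_inv q) \<le> taxi p q"
proof -
  obtain p1 p2 where pp: "p = (p1, p2)" by (cases p)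
  obtain q1 q2 where qq: "q = (q1, q2)" by (cases q)
  have r: "0 \<le> p1" "p1 \<le> 1" "0 \<le> p2" "p2 \<le> 1" "0 \<le> q1" "q1 \<le> 1" "0 \<le> q2" "q2 \<le> 1"
    using p q pp qq by (auto simp: U0_def)
  obtain w1 w2 where w: "0 \<le> w1" "w1 \<le> 1" "0 \<le> w2" "w2 \<le> 1"
     "\<bar>p1 - w1\<bar> + \<bar>w1 - w2\<bar> + \<bar>w2 - q1\<bar> = \<bar>p1 - q1\<bar>" "samecol p1 w1" "samecol w1 w2" "samecol w2 q1"
    using oneD[of p1 q1] r by blast
  obtain v1 v2 where v: "0 \<le> v1" "v1 \<le> 1" "0 \<le> v2" "v2 \<le> 1"
     "\<bar>p2 - v1\<bar> + \<bar>v1 - v2\<bar> + \<bar>v2 - q2\<bar> = \<bar>p2 - q2\<bar>" "samecol p2 v1" "samecol v1 v2" "samecol v2 q2"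
    using oneD[of p2 q2] r by blast
  define P where "P = [(p1,p2), (w1,p2), (w2,p2), (q1,p2), (q1,v1), (q1,v2), (q1,q2)]"
  have PU: "\<forall>k<7. P!k \<in> U0" using r w v by (auto simp: P_def U0_def less_Suc_eq numeral_eq_Suc)
  let ?D = "\<lambda>a b. tensor_dist U0 taxi S_U0 (alphaN_inv a) (alphaN_inv b)"
  have st: "?D (P!k) (P!(Suc k)) \<le> taxi (P!k) (P!(Suc k))" if "k < 6" for k
  proof -
    have "P!k \<in> U0" "P!(Suc k) \<in> U0" using PU that by auto
    moreover have "samecol (fst (P!k)) (fst (P!(Suc k))) \<and> samecol (snd (P!k)) (snd (P!(Suc k)))"
      using that r w v samecol_refl
      by (auto simp: P_def less_Suc_eq numeral_eq_Suc)
    ultimately show ?thesis using Hstep by blast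
  qed
  have tri: "?D a c \<le> ?D a b + ?D b c" if "a \<in> U0" "b \<in> U0" "c \<in> U0" for a b c
    using tdist_tri ainv_carrier that by blast
  have "?D (P!0) (P!6) \<le> (\<Sum>k<6. taxi (P!k) (P!(Suc k)))"
  proof -
    have "?D (P!0) (P!m) \<le> (\<Sum>k<m. taxi (P!k) (P!(Suc k)))" if "m \<le> 6" for m
      using that
    proof (induct m)
      case 0
      have p0: "P!0 = (p1,p2)" by (simp add: P_def)
      have "?D (p1,p2) (p1,p2) \<le> taxi (p1,p2) (p1,p2)"
        by (rule Hstep) (use r in \<open>auto simp: U0_def intro: samecol_refl\<close>)
      then show ?case by (simp add: p0 taxi_self)
    next
      case (Suc m)
      have "?D (P!0) (P!Suc m) \<le> ?D (P!0) (P!m) + ?D (P!m) (P!Suc m)"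
        using tri PU Suc.prems by simp
      moreover have "?D (P!m) (P!Suc m) \<le> taxi (P!m) (P!Suc m)" using st Suc.prems by simp
      moreover have "?D (P!0) (P!m) \<le> (\<Sum>k<m. taxi (P!k) (P!(Suc k)))" using Suc by simp
      ultimately show ?case by simp
    qed
    then show ?thesis by simp
  qed
  also have "(\<Sum>k<6. taxi (P!k) (P!(Suc k))) = taxi p q"
    using w(5) v(5) pp qq by (simp add: P_def taxi_def numeral_eq_Suc)
  finally show ?thesis using pp qq by (simp add: P_def)
qed

lemma part3: "sq_morphism U0 taxi S_U0 (tensor_carrier U0 S_U0) (tensor_dist U0 taxi S_U0)
                 (tensor_S U0 S_U0) alphaN_inv"
  unfolding sq_morphism_def
  using ainv_carrier ainv_short by (auto simp: alphaN_inv_def tensor_S_def S_U0_def)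


lemma gmap_taxi2: "fst a = fst b \<Longrightarrow> taxi (gmap h a) (gmap h' b) = taxi (h (snd a)) (h' (snd b)) / 3"
proof -
  assume True: "fst a = fst b"
  have q: "\<bar>(r + u)/3 - (r + v)/3\<bar> = \<bar>u - v\<bar>/3" for r u v :: real
    by (simp add: abs_divide[symmetric] diff_divide_distrib[symmetric])
  show ?thesis using True by (simp only: gmap_def taxi_def fst_conv snd_conv q) (simp add: add_divide_distrib)
qed

lemma alpha_ainv: "p \<in> U0 \<Longrightarrow> alphaN (alphaN_inv p) = p"
proof -
  assume p: "p \<in> U0"
  have "(cell_of p, rescale (cell_of p) p) \<in> Nidx \<times> U0" using cell_of[OF p] rescale_U0 by blast
  then show ?thesis unfolding alphaN_inv_def using alphaN_class gmap_rescale by simp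
qed

lemma ainv_alpha:
  assumes c: "c \<in> tensor_carrier U0 S_U0"
  shows "alphaN_inv (alphaN c) = c"
proof -
  obtain w where w: "w \<in> Nidx \<times> U0" "c = tensor_class U0 S_U0 w" using c by (rule carrier_E)
  obtain n u where nu: "w = (n, u)" by (cases w)
  have n: "n \<in> Nidx" and u: "u \<in> U0" using w nu by auto
  define p where "p = gmap (\<lambda>x. x) w"
  have ac: "alphaN c = p" using alphaN_class[OF w(1)] w(2) p_def by simp
  have pc: "in_cell n p" using u unfolding p_def nu gmap_def in_cell_def U0_def by auto
  have pU: "p \<in> U0" using gmap_U0'[OF w(1), of "\<lambda>x. x"] p_def by simp
  have rs: "rescale n p = u" unfolding p_def nu gmap_def rescale_def by (simp add: prod_eq_iff add_divide_distrib)
  have "((cell_of p, rescale (cell_of p) p), (n, rescale n p)) \<in> tensor_rel U0 S_U0"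
    using K cell_of[OF pU] n pc by blast
  then have "alphaN_inv p = tensor_class U0 S_U0 (n, u)" unfolding alphaN_inv_def rs by (rule class_eq)
  then show ?thesis using ac w(2) nu by simp
qed

lemma clamp_lip: "\<bar>max 0 (min 1 a) - max 0 (min 1 b)\<bar> \<le> \<bar>a - b\<bar>" for a b :: real
  by (simp add: max_def min_def abs_if)

lemma rot_bound: "\<bar>u\<bar> \<le> D \<Longrightarrow> \<bar>v\<bar> \<le> D \<Longrightarrow> \<bar>(u + v)/2\<bar> + \<bar>(u - v)/2\<bar> \<le> D" for u v D :: real
proof -
  assume a: "\<bar>u\<bar> \<le> D" "\<bar>v\<bar> \<le> D"
  have e: "\<bar>(u + v)/2\<bar> = \<bar>u + v\<bar>/2" "\<bar>(u - v)/2\<bar> = \<bar>u - v\<bar>/2" by simp_all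
  have "\<bar>u + v\<bar> + \<bar>u - v\<bar> \<le> 2 * D" using a by (cases "0 \<le> u + v"; cases "0 \<le> u - v") (auto simp: abs_le_iff)
  then show ?thesis unfolding e by simp
qed

lemma M0_ne: "(0,0) \<in> M0" by (simp add: M0_def)

lemma mcshane:
  assumes met: "metric_on X d" and SX: "S ` M0 \<subseteq> X"
    and sq2: "\<forall>p\<in>M0. \<forall>q\<in>M0. d (S p) (S q) \<ge> \<bar>fst p - fst q\<bar> + \<bar>snd p - snd q\<bar>"
    and cf: "\<forall>p\<in>M0. \<forall>q\<in>M0. \<bar>cf p - cf q\<bar> \<le> taxi p q"
    and cb: "\<forall>p\<in>M0. cf p \<ge> -1"
  defines "F \<equiv> \<lambda>x. Inf ((\<lambda>p. cf p + d x (S p)) ` M0)"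
  shows "\<forall>x\<in>X. \<forall>y\<in>X. F x \<le> F y + d x y" and "\<forall>q\<in>M0. F (S q) = cf q"
proof -
  have dpos: "\<forall>x\<in>X. \<forall>y\<in>X. 0 \<le> d x y" and dsym: "\<forall>x\<in>X. \<forall>y\<in>X. d x y = d y x"
    and d0: "\<forall>x\<in>X. d x x = 0"
    and dtri: "\<forall>x\<in>X. \<forall>y\<in>X. \<forall>z\<in>X. d x z \<le> d x y + d y z"
    using met unfolding metric_on_def by auto
  have ne: "(\<lambda>p. cf p + d x (S p)) ` M0 \<noteq> {}" for x using M0_ne by blast
  have bdd: "bdd_below ((\<lambda>p. cf p + d x (S p)) ` M0)" if "x \<in> X" for x
  proof (rule bdd_belowI[of _ "-1"])
    fix t assume "t \<in> (\<lambda>p. cf p + d x (S p)) ` M0"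
    then obtain p where "p \<in> M0" "t = cf p + d x (S p)" by blast
    then show "-1 \<le> t" using cb dpos SX that by fastforce
  qed
  show "\<forall>x\<in>X. \<forall>y\<in>X. F x \<le> F y + d x y"
  proof (intro ballI)
    fix x y assume x: "x \<in> X" and y: "y \<in> X"
    have "F x - d x y \<le> F y" unfolding F_def
    proof (rule cInf_greatest[OF ne])
      fix t assume "t \<in> (\<lambda>p. cf p + d y (S p)) ` M0"
      then obtain p where p: "p \<in> M0" "t = cf p + d y (S p)" by blast
      have Sp: "S p \<in> X" using SX p by blast
      have "Inf ((\<lambda>p. cf p + d x (S p)) ` M0) \<le> cf p + d x (S p)"
        using p(1) by (intro cInf_lower[OF _ bdd[OF x]]) blast
      also have "\<dots> \<le> cf p + d x y + d y (S p)" using dtri x y Sp by fastforce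
      finally show "Inf ((\<lambda>p. cf p + d x (S p)) ` M0) - d x y \<le> t" using p by simp
    qed
    then show "F x \<le> F y + d x y" by simp
  qed
  show "\<forall>q\<in>M0. F (S q) = cf q"
  proof
    fix q assume q: "q \<in> M0"
    have Sq: "S q \<in> X" using SX q by blast
    have "F (S q) \<le> cf q + d (S q) (S q)" unfolding F_def
      using q by (intro cInf_lower[OF _ bdd[OF Sq]]) blast
    then have le: "F (S q) \<le> cf q" using d0 Sq by simp
    have ge: "cf q \<le> F (S q)" unfolding F_def
    proof (rule cInf_greatest[OF ne])
      fix t assume "t \<in> (\<lambda>p. cf p + d (S q) (S p)) ` M0"
      then obtain p where p: "p \<in> M0" "t = cf p + d (S q) (S p)" by blast
      have "d (S q) (S p) \<ge> taxi q p" using sq2 p q unfolding taxi_def by blast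
      moreover have "cf q - cf p \<le> taxi q p" using cf p q by fastforce
      ultimately show "cf q \<le> t" using p by simp
    qed
    show "F (S q) = cf q" using le ge by simp
  qed
qed

definition clamp :: "real \<Rightarrow> real" where "clamp t = max 0 (min 1 t)"

lemma clamp_01: "0 \<le> clamp t" "clamp t \<le> 1" by (simp_all add: clamp_def)
lemma clamp_id: "0 \<le> t \<Longrightarrow> t \<le> 1 \<Longrightarrow> clamp t = t" by (simp add: clamp_def)
lemma clamp_lip2: "\<bar>clamp a - clamp b\<bar> \<le> \<bar>a - b\<bar>" unfolding clamp_def by (rule clamp_lip)

lemma rot2: "\<bar>u - u'\<bar> \<le> D \<Longrightarrow> \<bar>v - v'\<bar> \<le> D \<Longrightarrow>
   \<bar>(u + v)/2 - (u' + v')/2\<bar> + \<bar>(u - v)/2 - (u' - v')/2\<bar> \<le> D" for u v u' v' D :: real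
proof -
  assume a: "\<bar>u - u'\<bar> \<le> D" "\<bar>v - v'\<bar> \<le> D"
  have e1: "(u + v)/2 - (u' + v')/2 = ((u - u') + (v - v'))/2" by (simp add: field_simps)
  have e2: "(u - v)/2 - (u' - v')/2 = ((u - u') - (v - v'))/2" by (simp add: field_simps)
  show ?thesis unfolding e1 e2 by (rule rot_bound[OF a])
qed

definition h0 :: "'a set \<Rightarrow> ('a \<Rightarrow> 'a \<Rightarrow> real) \<Rightarrow> (real \<times> real \<Rightarrow> 'a) \<Rightarrow> 'a \<Rightarrow> real \<times> real" where
  "h0 X d S x = (let U = Inf ((\<lambda>p. (fst p + snd p) + d x (S p)) ` M0);
                     V = Inf ((\<lambda>p. (fst p - snd p) + d x (S p)) ` M0)
                 in (clamp ((U + V)/2), clamp ((U - V)/2)))"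

lemma h0_good:
  assumes sq: "square_ms X d S"
  shows "(\<forall>x\<in>X. h0 X d S x \<in> U0) \<and> (\<forall>p\<in>M0. h0 X d S (S p) = p) \<and>
         (\<forall>x\<in>X. \<forall>y\<in>X. taxi (h0 X d S x) (h0 X d S y) \<le> d x y)"
proof -
  have met: "metric_on X d" and SX: "S ` M0 \<subseteq> X"
    and sq2: "\<forall>p\<in>M0. \<forall>q\<in>M0. d (S p) (S q) \<ge> \<bar>fst p - fst q\<bar> + \<bar>snd p - snd q\<bar>"
    using sq unfolding square_ms_def by auto
  have dsym: "\<forall>x\<in>X. \<forall>y\<in>X. d x y = d y x" using met unfolding metric_on_def by auto
  define U where "U = (\<lambda>x. Inf ((\<lambda>p. (fst p + snd p) + d x (S p)) ` M0))"
  define V where "V = (\<lambda>x. Inf ((\<lambda>p. (fst p - snd p) + d x (S p)) ` M0))"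
  have cfU: "\<forall>p\<in>M0. \<forall>q\<in>M0. \<bar>(fst p + snd p) - (fst q + snd q)\<bar> \<le> taxi p q" by (auto simp: taxi_def)
  have cfV: "\<forall>p\<in>M0. \<forall>q\<in>M0. \<bar>(fst p - snd p) - (fst q - snd q)\<bar> \<le> taxi p q" by (auto simp: taxi_def)
  have cbU: "\<forall>p\<in>M0. (fst p + snd p) \<ge> -1" by (auto simp: M0_def)
  have cbV: "\<forall>p\<in>M0. (fst p - snd p) \<ge> -1" by (auto simp: M0_def)
  have mU1: "\<forall>x\<in>X. \<forall>y\<in>X. U x \<le> U y + d x y" and mU2: "\<forall>q\<in>M0. U (S q) = fst q + snd q"
    using mcshane[OF met SX sq2 cfU cbU] unfolding U_def by auto
  have mV1: "\<forall>x\<in>X. \<forall>y\<in>X. V x \<le> V y + d x y" and mV2: "\<forall>q\<in>M0. V (S q) = fst q - snd q"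
    using mcshane[OF met SX sq2 cfV cbV] unfolding V_def by auto
  have hdef: "h0 X d S x = (clamp ((U x + V x)/2), clamp ((U x - V x)/2))" for x
    unfolding h0_def U_def V_def Let_def by (rule refl)
  have inU: "\<forall>x\<in>X. h0 X d S x \<in> U0" unfolding hdef U0_def by (simp add: clamp_01)
  have bd: "\<forall>p\<in>M0. h0 X d S (S p) = p"
  proof
    fix p assume p: "p \<in> M0"
    have "U (S p) = fst p + snd p" "V (S p) = fst p - snd p" using mU2 mV2 p by auto
    moreover have "0 \<le> fst p" "fst p \<le> 1" "0 \<le> snd p" "snd p \<le> 1" using p by (auto simp: M0_def)
    ultimately show "h0 X d S (S p) = p" unfolding hdef by (simp add: clamp_id prod_eq_iff)
  qed
  have sh: "\<forall>x\<in>X. \<forall>y\<in>X. taxi (h0 X d S x) (h0 X d S y) \<le> d x y"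
  proof (intro ballI)
    fix x y assume x: "x \<in> X" and y: "y \<in> X"
    have u1: "U x \<le> U y + d x y" "U y \<le> U x + d y x" using mU1 x y by auto
    have v1: "V x \<le> V y + d x y" "V y \<le> V x + d y x" using mV1 x y by auto
    have dd: "d y x = d x y" using dsym x y by auto
    have u: "\<bar>U x - U y\<bar> \<le> d x y" using u1 dd by (simp add: abs_le_iff)
    have v: "\<bar>V x - V y\<bar> \<le> d x y" using v1 dd by (simp add: abs_le_iff)
    have "taxi (h0 X d S x) (h0 X d S y) \<le> \<bar>(U x + V x)/2 - (U y + V y)/2\<bar> + \<bar>(U x - V x)/2 - (U y - V y)/2\<bar>"
      unfolding hdef taxi_def fst_conv snd_conv by (intro add_mono clamp_lip2)
    also have "\<dots> \<le> d x y" by (rule rot2[OF u v])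
    finally show "taxi (h0 X d S x) (h0 X d S y) \<le> d x y" .
  qed
  show ?thesis using inU bd sh by blast
qed

lemma conv_geo:
  fixes f :: "nat \<Rightarrow> real"
  assumes "\<forall>n. \<bar>f (Suc n) - f n\<bar> \<le> 2 * (1/3)^n"
  shows "convergent f"
proof -
  have sg: "summable (\<lambda>n. 2 * (1/3::real)^n)" by (intro summable_mult summable_geometric) simp
  have s: "summable (\<lambda>n. f (Suc n) - f n)"
    by (rule summable_comparison_test'[OF sg]) (use assms in auto)
  have "(\<lambda>n. f 0 + (\<Sum>i<n. f (Suc i) - f i)) \<longlonglongrightarrow> f 0 + suminf (\<lambda>n. f (Suc n) - f n)"
    by (intro tendsto_add tendsto_const summable_LIMSEQ[OF s])
  then have "f \<longlonglongrightarrow> f 0 + suminf (\<lambda>n. f (Suc n) - f n)" by (simp add: sum_lessThan_telescope)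
  then show ?thesis by (auto simp: convergent_def)
qed

lemma geo_zero:
  assumes "\<forall>n. t \<le> 2 * (1/3::real)^n"
  shows "t \<le> 0"
proof -
  have "(\<lambda>n. 2 * (1/3::real)^n) \<longlonglongrightarrow> 2 * 0"
    by (intro tendsto_mult tendsto_const LIMSEQ_power_zero) simp
  then have l: "(\<lambda>n. 2 * (1/3::real)^n) \<longlonglongrightarrow> 0" by simp
  show ?thesis by (rule LIMSEQ_le_const[OF l]) (use assms in blast)
qed


definition Phi :: "'a set \<Rightarrow> (real \<times> real \<Rightarrow> 'a) \<Rightarrow> ('a \<Rightarrow> ((nat \<times> nat) \<times> 'a) set) \<Rightarrow> ('a \<Rightarrow> real \<times> real) \<Rightarrow> 'a \<Rightarrow> real \<times> real" where
  "Phi X S e h = (\<lambda>x. alphaN (tensor_map U0 S_U0 h (e x)))"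

definition hs where "hs X d S e n = (Phi X S e ^^ n) (h0 X d S)"

definition good :: "'a set \<Rightarrow> ('a \<Rightarrow> 'a \<Rightarrow> real) \<Rightarrow> (real \<times> real \<Rightarrow> 'a) \<Rightarrow> ('a \<Rightarrow> real \<times> real) \<Rightarrow> bool" where
  "good X d S h \<longleftrightarrow> (\<forall>x\<in>X. h x \<in> U0) \<and> (\<forall>p\<in>M0. h (S p) = p) \<and> (\<forall>x\<in>X. \<forall>y\<in>X. taxi (h x) (h y) \<le> d x y)"

lemma good_morph: "sq_morphism X d S U0 taxi S_U0 h \<longleftrightarrow> good X d S h"
  unfolding sq_morphism_def good_def S_U0_def by auto

definition Hlim where "Hlim X d S e x = (lim (\<lambda>n. fst (hs X d S e n x)), lim (\<lambda>n. snd (hs X d S e n x)))"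

context
  fixes X :: "'a set" and d S e
  assumes sq: "square_ms X d S"
    and em: "sq_morphism X d S (tensor_carrier X S) (tensor_dist X d S) (tensor_S X S) e"
begin

lemma SX: "p \<in> M0 \<Longrightarrow> S p \<in> X" using sq unfolding square_ms_def by auto

lemma eX: "x \<in> X \<Longrightarrow> e x \<in> tensor_carrier X S" using em unfolding sq_morphism_def by auto

lemma esh: "x \<in> X \<Longrightarrow> y \<in> X \<Longrightarrow> tensor_dist X d S (e x) (e y) \<le> d x y"
  using em unfolding sq_morphism_def by auto

lemma eb: "p \<in> M0 \<Longrightarrow> e (S p) = tensor_S X S p" using em unfolding sq_morphism_def by auto

lemma zx: "x \<in> X \<Longrightarrow> (SOME z. z \<in> e x) \<in> e x \<and> (SOME z. z \<in> e x) \<in> Nidx \<times> X"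
proof -
  assume x: "x \<in> X"
  obtain w where w: "w \<in> Nidx \<times> X" "e x = tensor_class X S w" using eX[OF x] by (rule carrier_E)
  have "w \<in> e x" using class_self[OF w(1)] w(2) by simp
  then have "(SOME z. z \<in> e x) \<in> e x" by (rule someI)
  then show ?thesis using w class_sub by blast
qed

lemma Phi_eq:
  assumes hU: "\<forall>x\<in>X. h x \<in> U0" and hb: "\<forall>p\<in>M0. h (S p) = p" and x: "x \<in> X"
  shows "Phi X S e h x = gmap h (SOME z. z \<in> e x)"
  unfolding Phi_def using tmap_alpha[OF hU hb eX[OF x]] zx[OF x] by blast

lemma Phi_good:
  assumes g: "good X d S h"
  shows "good X d S (Phi X S e h)"
proof -
  have hU: "\<forall>x\<in>X. h x \<in> U0" and hb: "\<forall>p\<in>M0. h (S p) = p"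
    and hs: "\<forall>x\<in>X. \<forall>y\<in>X. taxi (h x) (h y) \<le> d x y" using g unfolding good_def by auto
  have U: "\<forall>x\<in>X. Phi X S e h x \<in> U0"
    using Phi_eq[OF hU hb] zx gmap_U0'[OF _ hU] by simp
  have B: "\<forall>p\<in>M0. Phi X S e h (S p) = p"
  proof
    fix p assume p: "p \<in> M0"
    have pU: "p \<in> U0" using p by (rule M0_sub_U0)
    define n where "n = cell_of p"
    define r where "r = rescale n p"
    have n: "n \<in> Nidx" "in_cell n p" using cell_of[OF pU] n_def by auto
    have r: "r \<in> M0" using rescale_M0[OF p n] r_def by simp
    have zA: "(n, S r) \<in> Nidx \<times> X" using n SX[OF r] by simp
    have ze: "(n, S r) \<in> e (S p)" using eb[OF p] class_self[OF zA] unfolding tensor_S_def n_def r_def by simp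
    have "Phi X S e h (S p) = gmap h (n, S r)"
      unfolding Phi_def by (rule tmap_alpha[OF hU hb eX[OF SX[OF p]] ze])
    also have "\<dots> = gmap (\<lambda>x. x) (n, r)" using hb r by (simp add: gmap_def)
    also have "\<dots> = p" unfolding r_def by (rule gmap_rescale)
    finally show "Phi X S e h (S p) = p" .
  qed
  have Sh: "\<forall>x\<in>X. \<forall>y\<in>X. taxi (Phi X S e h x) (Phi X S e h y) \<le> d x y"
  proof (intro ballI)
    fix x y assume x: "x \<in> X" and y: "y \<in> X"
    have "taxi (Phi X S e h x) (Phi X S e h y) \<le> tensor_dist X d S (e x) (e y)"
      unfolding Phi_eq[OF hU hb x] Phi_eq[OF hU hb y]
      by (rule tdist_lower[OF hU hb hs eX[OF x] eX[OF y]]) (use zx[OF x] zx[OF y] in auto)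
    also have "\<dots> \<le> d x y" by (rule esh[OF x y])
    finally show "taxi (Phi X S e h x) (Phi X S e h y) \<le> d x y" .
  qed
  show ?thesis unfolding good_def using U B Sh by blast
qed

lemma contr:
  assumes g: "good X d S h" and g': "good X d S h'" and K: "\<forall>y\<in>X. taxi (h y) (h' y) \<le> K"
  shows "\<forall>x\<in>X. taxi (Phi X S e h x) (Phi X S e h' x) \<le> K / 3"
proof
  fix x assume x: "x \<in> X"
  have hU: "\<forall>x\<in>X. h x \<in> U0" and hb: "\<forall>p\<in>M0. h (S p) = p" using g unfolding good_def by auto
  have hU': "\<forall>x\<in>X. h' x \<in> U0" and hb': "\<forall>p\<in>M0. h' (S p) = p" using g' unfolding good_def by auto
  let ?z = "SOME z. z \<in> e x"
  have "taxi (Phi X S e h x) (Phi X S e h' x) = taxi (h (snd ?z)) (h' (snd ?z)) / 3"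
    unfolding Phi_eq[OF hU hb x] Phi_eq[OF hU' hb' x] by (rule gmap_taxi2) simp
  also have "\<dots> \<le> K / 3" using K zx[OF x] by auto
  finally show "taxi (Phi X S e h x) (Phi X S e h' x) \<le> K / 3" .
qed

lemma hs_Suc: "hs X d S e (Suc n) = Phi X S e (hs X d S e n)"
  by (simp add: hs_def)

lemma hs_good: "good X d S (hs X d S e n)"
proof (induct n)
  case 0 then show ?case using h0_good[OF sq] by (simp add: hs_def good_def)
next
  case (Suc n) then show ?case unfolding hs_Suc by (rule Phi_good)
qed

lemma hs_step: "\<forall>x\<in>X. taxi (hs X d S e (Suc n) x) (hs X d S e n x) \<le> 2 * (1/3)^n"
proof (induct n)
  case 0
  show ?case using hs_good[of "Suc 0"] hs_good[of 0] taxi_U0 unfolding good_def by simp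
next
  case (Suc n)
  have "\<forall>x\<in>X. taxi (Phi X S e (hs X d S e (Suc n)) x) (Phi X S e (hs X d S e n) x) \<le> 2 * (1/3)^n / 3"
    by (rule contr[OF hs_good hs_good Suc])
  then show ?case unfolding hs_Suc[of "Suc n"] hs_Suc[of n] by simp
qed

lemma hs_lim:
  assumes x: "x \<in> X"
  shows "(\<lambda>n. fst (hs X d S e n x)) \<longlonglongrightarrow> fst (Hlim X d S e x)"
    and "(\<lambda>n. snd (hs X d S e n x)) \<longlonglongrightarrow> snd (Hlim X d S e x)"
proof -
  have "\<forall>n. \<bar>fst (hs X d S e (Suc n) x) - fst (hs X d S e n x)\<bar> \<le> 2 * (1/3)^n"
    using hs_step x unfolding taxi_def by (smt (verit, best) abs_ge_zero)
  then have "convergent (\<lambda>n. fst (hs X d S e n x))" by (rule conv_geo)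
  then show "(\<lambda>n. fst (hs X d S e n x)) \<longlonglongrightarrow> fst (Hlim X d S e x)"
    unfolding Hlim_def by (simp add: convergent_LIMSEQ_iff)
  have "\<forall>n. \<bar>snd (hs X d S e (Suc n) x) - snd (hs X d S e n x)\<bar> \<le> 2 * (1/3)^n"
    using hs_step x unfolding taxi_def by (smt (verit, best) abs_ge_zero)
  then have "convergent (\<lambda>n. snd (hs X d S e n x))" by (rule conv_geo)
  then show "(\<lambda>n. snd (hs X d S e n x)) \<longlonglongrightarrow> snd (Hlim X d S e x)"
    unfolding Hlim_def by (simp add: convergent_LIMSEQ_iff)
qed

end


context
  fixes X :: "'a set" and d S e
  assumes sq: "square_ms X d S"
    and em: "sq_morphism X d S (tensor_carrier X S) (tensor_dist X d S) (tensor_S X S) e"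
begin

lemma H_good: "good X d S (Hlim X d S e)"
proof -
  note L = hs_lim[OF sq em]
  have gn: "\<And>n. good X d S (hs X d S e n)" by (rule hs_good[OF sq em])
  have U: "\<forall>x\<in>X. Hlim X d S e x \<in> U0"
  proof
    fix x assume x: "x \<in> X"
    have b: "\<And>n. 0 \<le> fst (hs X d S e n x) \<and> fst (hs X d S e n x) \<le> 1 \<and> 0 \<le> snd (hs X d S e n x) \<and> snd (hs X d S e n x) \<le> 1"
      using gn x unfolding good_def U0_def by (simp add: mem_Times_iff)
    have "0 \<le> fst (Hlim X d S e x)" by (rule LIMSEQ_le_const[OF L(1)[OF x]]) (use b in auto)
    moreover have "fst (Hlim X d S e x) \<le> 1" by (rule LIMSEQ_le_const2[OF L(1)[OF x]]) (use b in auto)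
    moreover have "0 \<le> snd (Hlim X d S e x)" by (rule LIMSEQ_le_const[OF L(2)[OF x]]) (use b in auto)
    moreover have "snd (Hlim X d S e x) \<le> 1" by (rule LIMSEQ_le_const2[OF L(2)[OF x]]) (use b in auto)
    ultimately show "Hlim X d S e x \<in> U0" unfolding U0_def by (simp add: mem_Times_iff)
  qed
  have B: "\<forall>p\<in>M0. Hlim X d S e (S p) = p"
  proof
    fix p assume p: "p \<in> M0"
    have "\<And>n. hs X d S e n (S p) = p" using gn p unfolding good_def by auto
    then show "Hlim X d S e (S p) = p" unfolding Hlim_def by (simp add: limI)
  qed
  have Sh: "\<forall>x\<in>X. \<forall>y\<in>X. taxi (Hlim X d S e x) (Hlim X d S e y) \<le> d x y"
  proof (intro ballI)
    fix x y assume x: "x \<in> X" and y: "y \<in> X"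
    have t: "(\<lambda>n. taxi (hs X d S e n x) (hs X d S e n y)) \<longlonglongrightarrow> taxi (Hlim X d S e x) (Hlim X d S e y)"
      unfolding taxi_def by (intro tendsto_intros L x y)
    show "taxi (Hlim X d S e x) (Hlim X d S e y) \<le> d x y"
      by (rule LIMSEQ_le_const2[OF t]) (use gn x y in \<open>auto simp: good_def\<close>)
  qed
  show ?thesis unfolding good_def using U B Sh by blast
qed

lemma H_fix: "x \<in> X \<Longrightarrow> Hlim X d S e x = Phi X S e (Hlim X d S e) x"
proof -
  assume x: "x \<in> X"
  note L = hs_lim[OF sq em]
  have gn: "\<And>n. good X d S (hs X d S e n)" by (rule hs_good[OF sq em])
  have gH: "good X d S (Hlim X d S e)" by (rule H_good)
  let ?z = "SOME z. z \<in> e x"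
  have z: "?z \<in> Nidx \<times> X" using zx[OF sq em x] by blast
  have u: "snd ?z \<in> X" using z by auto
  have eqn: "\<And>n. hs X d S e (Suc n) x = gmap (hs X d S e n) ?z"
    unfolding hs_Suc[OF sq em] using Phi_eq[OF sq em _ _ x] gn unfolding good_def by blast
  have eqH: "Phi X S e (Hlim X d S e) x = gmap (Hlim X d S e) ?z"
    using Phi_eq[OF sq em _ _ x] gH unfolding good_def by blast
  have f1: "(\<lambda>n. fst (hs X d S e (Suc n) x)) \<longlonglongrightarrow> fst (Hlim X d S e x)" by (rule LIMSEQ_Suc[OF L(1)[OF x]])
  have f2: "(\<lambda>n. fst (hs X d S e (Suc n) x)) \<longlonglongrightarrow> fst (gmap (Hlim X d S e) ?z)"
  proof -
    have "(\<lambda>n. (real (fst (fst ?z)) + fst (hs X d S e n (snd ?z)))/3) \<longlonglongrightarrow> (real (fst (fst ?z)) + fst (Hlim X d S e (snd ?z)))/3"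
      by (intro tendsto_divide tendsto_add tendsto_const L(1)[OF u]) simp
    then show ?thesis unfolding eqn by (simp add: gmap_def)
  qed
  have s1: "(\<lambda>n. snd (hs X d S e (Suc n) x)) \<longlonglongrightarrow> snd (Hlim X d S e x)" by (rule LIMSEQ_Suc[OF L(2)[OF x]])
  have s2: "(\<lambda>n. snd (hs X d S e (Suc n) x)) \<longlonglongrightarrow> snd (gmap (Hlim X d S e) ?z)"
  proof -
    have "(\<lambda>n. (real (snd (fst ?z)) + snd (hs X d S e n (snd ?z)))/3) \<longlonglongrightarrow> (real (snd (fst ?z)) + snd (Hlim X d S e (snd ?z)))/3"
      by (intro tendsto_divide tendsto_add tendsto_const L(2)[OF u]) simp
    then show ?thesis unfolding eqn by (simp add: gmap_def)
  qed
  have "fst (Hlim X d S e x) = fst (gmap (Hlim X d S e) ?z)" using LIMSEQ_unique[OF f1 f2] .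
  moreover have "snd (Hlim X d S e x) = snd (gmap (Hlim X d S e) ?z)" using LIMSEQ_unique[OF s1 s2] .
  ultimately show ?thesis unfolding eqH by (simp add: prod_eq_iff)
qed

lemma H_unique:
  assumes g: "good X d S h" and fx: "\<forall>x\<in>X. h x = Phi X S e h x"
  shows "\<forall>x\<in>X. h x = Hlim X d S e x"
proof -
  have gH: "good X d S (Hlim X d S e)" by (rule H_good)
  have b: "\<forall>x\<in>X. taxi (h x) (Hlim X d S e x) \<le> 2 * (1/3)^n" for n
  proof (induct n)
    case 0 show ?case using g gH taxi_U0 unfolding good_def by simp
  next
    case (Suc n)
    have "\<forall>x\<in>X. taxi (Phi X S e h x) (Phi X S e (Hlim X d S e) x) \<le> 2 * (1/3)^n / 3"
      by (rule contr[OF sq em g gH Suc])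
    then show ?case using fx H_fix by simp
  qed
  show ?thesis
  proof
    fix x assume x: "x \<in> X"
    have "taxi (h x) (Hlim X d S e x) \<le> 0" by (rule geo_zero) (use b x in blast)
    then show "h x = Hlim X d S e x" unfolding taxi_def prod_eq_iff by (smt (verit))
  qed
qed

lemma corec_ex:
  "\<exists>h. sq_morphism X d S U0 taxi S_U0 h \<and>
              (\<forall>x\<in>X. h x = alphaN (tensor_map U0 S_U0 h (e x))) \<and>
              (\<forall>h'. sq_morphism X d S U0 taxi S_U0 h' \<and>
                    (\<forall>x\<in>X. h' x = alphaN (tensor_map U0 S_U0 h' (e x))) \<longrightarrow>
                    (\<forall>x\<in>X. h' x = h x))"
  apply (rule exI[of _ "Hlim X d S e"])
  using H_good H_fix H_unique unfolding good_morph Phi_def by blast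

lemma final_ex:
  "\<exists>h. sq_morphism X d S U0 taxi S_U0 h \<and>
              (\<forall>x\<in>X. alphaN_inv (h x) = tensor_map U0 S_U0 h (e x)) \<and>
              (\<forall>h'. sq_morphism X d S U0 taxi S_U0 h' \<and>
                    (\<forall>x\<in>X. alphaN_inv (h' x) = tensor_map U0 S_U0 h' (e x)) \<longrightarrow>
                    (\<forall>x\<in>X. h' x = h x))"
proof (rule exI[of _ "Hlim X d S e"], intro conjI allI impI)
  have gH: "good X d S (Hlim X d S e)" by (rule H_good)
  then show "sq_morphism X d S U0 taxi S_U0 (Hlim X d S e)" unfolding good_morph .
  show "\<forall>x\<in>X. alphaN_inv (Hlim X d S e x) = tensor_map U0 S_U0 (Hlim X d S e) (e x)"
  proof
    fix x assume x: "x \<in> X"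
    have c: "tensor_map U0 S_U0 (Hlim X d S e) (e x) \<in> tensor_carrier U0 S_U0"
      using tmap_carrier gH eX[OF sq em x] unfolding good_def by blast
    have "alphaN_inv (Hlim X d S e x) = alphaN_inv (alphaN (tensor_map U0 S_U0 (Hlim X d S e) (e x)))"
      using H_fix[OF x] unfolding Phi_def by simp
    also have "\<dots> = tensor_map U0 S_U0 (Hlim X d S e) (e x)" by (rule ainv_alpha[OF c])
    finally show "alphaN_inv (Hlim X d S e x) = tensor_map U0 S_U0 (Hlim X d S e) (e x)" .
  qed
  fix h'
  assume a: "sq_morphism X d S U0 taxi S_U0 h' \<and> (\<forall>x\<in>X. alphaN_inv (h' x) = tensor_map U0 S_U0 h' (e x))"
  then have g': "good X d S h'" unfolding good_morph by blast
  have "\<forall>x\<in>X. h' x = Phi X S e h' x"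
  proof
    fix x assume x: "x \<in> X"
    have "h' x = alphaN (alphaN_inv (h' x))" using alpha_ainv g' x unfolding good_def by simp
    also have "\<dots> = Phi X S e h' x" using a x unfolding Phi_def by simp
    finally show "h' x = Phi X S e h' x" .
  qed
  then show "\<forall>x\<in>X. h' x = Hlim X d S e x" by (rule H_unique[OF g'])
qed

end


theorem mainTheorem6:
  shows
  "sq_morphism (tensor_carrier U0 S_U0) (tensor_dist U0 taxi S_U0) (tensor_S U0 S_U0)
               U0 taxi S_U0 alphaN
   \<and> (\<forall>(X :: 'a set) d S e.
        square_ms X d S \<and>
        sq_morphism X d S (tensor_carrier X S) (tensor_dist X d S) (tensor_S X S) e \<longrightarrow>
        (\<exists>h. sq_morphism X d S U0 taxi S_U0 h \<and>
              (\<forall>x\<in>X. h x = alphaN (tensor_map U0 S_U0 h (e x))) \<and>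
              (\<forall>h'. sq_morphism X d S U0 taxi S_U0 h' \<and>
                    (\<forall>x\<in>X. h' x = alphaN (tensor_map U0 S_U0 h' (e x))) \<longrightarrow>
                    (\<forall>x\<in>X. h' x = h x))))
   \<and> sq_morphism U0 taxi S_U0 (tensor_carrier U0 S_U0) (tensor_dist U0 taxi S_U0)
                 (tensor_S U0 S_U0) alphaN_inv
   \<and> (\<forall>(X :: 'a set) d S e.
        square_ms X d S \<and>
        sq_morphism X d S (tensor_carrier X S) (tensor_dist X d S) (tensor_S X S) e \<longrightarrow>
        (\<exists>h. sq_morphism X d S U0 taxi S_U0 h \<and>
              (\<forall>x\<in>X. alphaN_inv (h x) = tensor_map U0 S_U0 h (e x)) \<and>
              (\<forall>h'. sq_morphism X d S U0 taxi S_U0 h' \<and>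
                    (\<forall>x\<in>X. alphaN_inv (h' x) = tensor_map U0 S_U0 h' (e x)) \<longrightarrow>
                    (\<forall>x\<in>X. h' x = h x))))"
  proof (intro conjI)
  show "sq_morphism (tensor_carrier U0 S_U0) (tensor_dist U0 taxi S_U0) (tensor_S U0 S_U0)
               U0 taxi S_U0 alphaN" by (rule part1)
  show "sq_morphism U0 taxi S_U0 (tensor_carrier U0 S_U0) (tensor_dist U0 taxi S_U0)
                 (tensor_S U0 S_U0) alphaN_inv" by (rule part3)
next
  show "\<forall>(X :: 'a set) d S e.
        square_ms X d S \<and>
        sq_morphism X d S (tensor_carrier X S) (tensor_dist X d S) (tensor_S X S) e \<longrightarrow>
        (\<exists>h. sq_morphism X d S U0 taxi S_U0 h \<and>
              (\<forall>x\<in>X. h x = alphaN (tensor_map U0 S_U0 h (e x))) \<and>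
              (\<forall>h'. sq_morphism X d S U0 taxi S_U0 h' \<and>
                    (\<forall>x\<in>X. h' x = alphaN (tensor_map U0 S_U0 h' (e x))) \<longrightarrow>
                    (\<forall>x\<in>X. h' x = h x)))"
    using corec_ex by blast
next
  show "\<forall>(X :: 'a set) d S e.
        square_ms X d S \<and>
        sq_morphism X d S (tensor_carrier X S) (tensor_dist X d S) (tensor_S X S) e \<longrightarrow>
        (\<exists>h. sq_morphism X d S U0 taxi S_U0 h \<and>
              (\<forall>x\<in>X. alphaN_inv (h x) = tensor_map U0 S_U0 h (e x)) \<and>
              (\<forall>h'. sq_morphism X d S U0 taxi S_U0 h' \<and>
                    (\<forall>x\<in>X. alphaN_inv (h' x) = tensor_map U0 S_U0 h' (e x)) \<longrightarrow>
                    (\<forall>x\<in>X. h' x = h x)))"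
    using final_ex by blast
qed

end
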